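(* Fix the number of treatment days $N\ge1$ and consider the problem: minimize $Y_{N-1}^+$ over doses $d_0,\dots,d_{N-1}\ge0$ subject to $\sum_{k=0}^{N-1}\mathrm{BED}_O(d_k)\le c$. Assume $\phi(x)>0$ for all $x>0$ and that $\phi$ is non-increasing in $x$. If $[\alpha/\beta]_O\ge\gamma[\alpha/\beta]_T$, then it is optimal to deliver a single dose $$d_{N-1}^*=\frac{[\alpha/\beta]_O}{2\gamma}\left[\sqrt{1+\frac{4c}{[\alpha/\beta]_O}}-1\right]$$ on the last day and $d_i=0$ for $i<N-1$. If $[\alpha/\beta]_O<\gamma[\alpha/\beta]_T$, then any optimal sequence of doses satisfies $d_0^*\le d_1^*\le\cdots\le d_{N-1}^*$.
   Context: Model: Tumor parameters $\alpha_T>0$, $\beta_T>0$, $[\alpha/\beta]_T=\alpha_T/\beta_T$; organ-at-risk (OAR) parameter $[\alpha/\beta]_O>0$; sparing factor $0<\gamma<1$; OAR limit $c>0$. Define $\mathrm{BED}_T(d)=d\left(1+\frac{d}{[\alpha/\beta]_T}\right)$ and $\mathrm{BED}_O(d)=\gamma d\left(1+\frac{\gamma d}{[\alpha/\beta]_O}\right)$. Tumor growth between doses follows $\frac{1}{x}\frac{dx}{dt}=\phi(x)$, with $\phi:(0,\infty)\to\mathbb{R}$ continuous and non-increasing. Doses $d_0,\dots,d_{N-1}$ are delivered at times $0,1,\dots,N-1$. With $Y=\ln(\text{number of tumor cells})/\alpha_T$, let $F$ be the one-day growth map for $Y$ under the ODE. With initial cell number $X_0>0$ and $Y_0^-=\ln(X_0)/\alpha_T$: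 $Y_0^+=Y_0^--\mathrm{BED}_T(d_0)$, $Y_{i+1}^+=F(Y_i^+)-\mathrm{BED}_T(d_{i+1})$ for $i=0,\dots,N-2$. *)

theory Defs
  imports "HOL-Analysis.Analysis"
begin

definition BED_T :: "real \<Rightarrow> real \<Rightarrow> real" where
  "BED_T abT d = d * (1 + d / abT)"

definition BED_O :: "real \<Rightarrow> real \<Rightarrow> real \<Rightarrow> real" where
  "BED_O abO \<gamma> d = \<gamma> * d * (1 + \<gamma> * d / abO)"

definition growth_sol :: "(real \<Rightarrow> real) \<Rightarrow> real \<Rightarrow> (real \<Rightarrow> real) \<Rightarrow> bool" where
  "growth_sol \<phi> x0 x \<longleftrightarrow> x 0 = x0 \<and>
     (\<forall>t\<in>{0..1}. 0 < x t \<and> (x has_real_derivative (x t * \<phi> (x t))) (at t within {0..1}))"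

text \<open>One-day growth map for Y = ln(number of cells)/alpha_T.\<close>
definition F_map :: "(real \<Rightarrow> real) \<Rightarrow> real \<Rightarrow> real \<Rightarrow> real" where
  "F_map \<phi> \<alpha>T y = ln (THE v. \<exists>x. growth_sol \<phi> (exp (\<alpha>T * y)) x \<and> v = x 1) / \<alpha>T"

fun Yplus :: "(real \<Rightarrow> real) \<Rightarrow> real \<Rightarrow> real \<Rightarrow> real \<Rightarrow> (nat \<Rightarrow> real) \<Rightarrow> nat \<Rightarrow> real" where
  "Yplus \<phi> \<alpha>T abT X0 d 0 = ln X0 / \<alpha>T - BED_T abT (d 0)"
| "Yplus \<phi> \<alpha>T abT X0 d (Suc i) = F_map \<phi> \<alpha>T (Yplus \<phi> \<alpha>T abT X0 d i) - BED_T abT (d (Suc i))"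

definition feasible :: "nat \<Rightarrow> real \<Rightarrow> real \<Rightarrow> real \<Rightarrow> (nat \<Rightarrow> real) \<Rightarrow> bool" where
  "feasible N abO \<gamma> c d \<longleftrightarrow> (\<forall>i<N. 0 \<le> d i) \<and> (\<Sum>k<N. BED_O abO \<gamma> (d k)) \<le> c"

definition optimal :: "(real \<Rightarrow> real) \<Rightarrow> real \<Rightarrow> real \<Rightarrow> real \<Rightarrow> nat \<Rightarrow> real \<Rightarrow> real \<Rightarrow> real
    \<Rightarrow> (nat \<Rightarrow> real) \<Rightarrow> bool" where
  "optimal \<phi> \<alpha>T abT X0 N abO \<gamma> c d \<longleftrightarrow> feasible N abO \<gamma> c d \<and>
     (\<forall>d'. feasible N abO \<gamma> c d' \<longrightarrow> Yplus \<phi> \<alpha>T abT X0 d (N - 1) \<le> Yplus \<phi> \<alpha>T abT X0 d' (N - 1))"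

end

theory Submission
  imports Defs
begin


locale grow =
  fixes \<phi> :: "real \<Rightarrow> real" and \<alpha>T :: real
  assumes aT: "0 < \<alpha>T"
    and cont: "continuous_on {0<..} \<phi>"
    and mono: "\<And>x y. 0 < x \<Longrightarrow> x \<le> y \<Longrightarrow> \<phi> y \<le> \<phi> x"
    and pos: "\<And>x. 0 < x \<Longrightarrow> 0 < \<phi> x"
begin

definition k :: "real \<Rightarrow> real" where "k y = \<alpha>T / \<phi> (exp (\<alpha>T * y))"
definition K :: "real \<Rightarrow> real \<Rightarrow> real" where "K a y = integral {a..y} k"

lemma k_pos: "0 < k y" unfolding k_def using aT pos by simp

lemma k_mono: "y \<le> z \<Longrightarrow> k y \<le> k z"
proof -
  assume "y \<le> z"
  have "exp (\<alpha>T * y) \<le> exp (\<alpha>T * z)" using \<open>y \<le> z\<close> aT by simp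
  then have "\<phi> (exp (\<alpha>T * z)) \<le> \<phi> (exp (\<alpha>T * y))" by (intro mono) auto
  moreover have "0 < \<phi> (exp (\<alpha>T * z))" "0 < \<phi> (exp (\<alpha>T * y))" by (auto intro: pos)
  ultimately show ?thesis unfolding k_def using aT by (intro divide_left_mono) auto
qed

lemma k_cont: "continuous_on UNIV k"
proof -
  have "continuous_on UNIV (\<lambda>y. \<phi> (exp (\<alpha>T * y)))"
    by (rule continuous_on_compose2[OF cont]) (auto intro!: continuous_intros)
  then show ?thesis unfolding k_def using pos
    by (intro continuous_intros) (auto simp: less_imp_neq[symmetric])
qed

lemma K_der: "a < y \<Longrightarrow> (K a has_real_derivative k y) (at y)"
proof -
  assume "a < y"
  have "((\<lambda>x. integral {a..x} k) has_real_derivative k y) (at y within {a..y+1})"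
    by (rule integral_has_real_derivative) (use \<open>a<y\<close> continuous_on_subset[OF k_cont] in auto)
  moreover have "at y within {a..y+1} = at y" using \<open>a<y\<close> by (intro at_within_Icc_at) auto
  ultimately show ?thesis unfolding K_def by simp
qed

lemma K_strict: "a < y \<Longrightarrow> y < z \<Longrightarrow> K a y < K a z"
proof -
  assume "a < y" "y < z"
  show ?thesis
    proof (rule DERIV_pos_imp_increasing[OF \<open>y<z\<close>])
      fix x assume "y \<le> x" "x \<le> z"
      then show "\<exists>d. (K a has_real_derivative d) (at x) \<and> 0 < d"
        using K_der[of a x] k_pos[of x] \<open>a<y\<close> by auto
    qed
qed

lemma K_le_iff: "a < y \<Longrightarrow> a < z \<Longrightarrow> K a y \<le> K a z \<longleftrightarrow> y \<le> z"
  using K_strict[of a y z] K_strict[of a z y] by (cases y z rule: linorder_cases) auto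

lemma K_eq_iff: "a < y \<Longrightarrow> a < z \<Longrightarrow> K a y = K a z \<longleftrightarrow> y = z"
  using K_strict[of a y z] K_strict[of a z y] by (cases y z rule: linorder_cases) auto

lemma K_lin: "a < y \<Longrightarrow> y \<le> z \<Longrightarrow> (z - y) * k y \<le> K a z - K a y"
proof -
  assume a: "a < y" "y \<le> z"
  have "(\<lambda>s. K a s - s * k y) y \<le> (\<lambda>s. K a s - s * k y) z"
  proof (rule DERIV_nonneg_imp_nondecreasing[OF a(2)])
    fix s assume "y \<le> s" "s \<le> z"
    then show "\<exists>d. ((\<lambda>s. K a s - s * k y) has_real_derivative d) (at s) \<and> 0 \<le> d"
      using a K_der[of a s] k_mono[of y s]
      by (intro exI[of _ "k s - k y"]) (auto intro!: derivative_eq_intros)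
  qed
  then show ?thesis by (simp add: algebra_simps)
qed

lemma K_shift: "a < y \<Longrightarrow> y \<le> w \<Longrightarrow> 0 \<le> c \<Longrightarrow> K a (y+c) - K a y \<le> K a (w + c) - K a w"
proof -
  assume a: "a < y" "y \<le> w" "0 \<le> c"
  show ?thesis
  proof (rule DERIV_nonneg_imp_nondecreasing[OF a(2), where f = "\<lambda>s. K a (s+c) - K a s"])
    fix s assume "y \<le> s" "s \<le> w"
    then show "\<exists>d. ((\<lambda>s. K a (s+c) - K a s) has_real_derivative d) (at s) \<and> 0 \<le> d"
    proof (intro exI conjI)
      show "((\<lambda>s. K a (s+c) - K a s) has_real_derivative (k (s+c) * 1 - k s)) (at s)"
        using a \<open>y \<le> s\<close> K_der[of a s] K_der[of a "s+c"]
        by (intro derivative_intros DERIV_chain2[of "K a"]) (auto intro!: derivative_eq_intros)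
      show "0 \<le> k (s+c) * 1 - k s" using k_mono[of s "s+c"] a by simp
    qed
  qed
qed

lemma sol_char:
  assumes sol: "growth_sol \<phi> (exp (\<alpha>T*y)) x" and a: "a < y"
  shows "K a (ln (x 1)/\<alpha>T) = K a y + 1 \<and> y \<le> ln (x 1)/\<alpha>T"
proof -
  have x0: "x 0 = exp (\<alpha>T*y)" and xp: "\<And>t. t \<in> {0..1} \<Longrightarrow> 0 < x t"
    and xd: "\<And>t. t \<in> {0..1} \<Longrightarrow> (x has_real_derivative (x t * \<phi> (x t))) (at t within {0..1})"
    using sol unfolding growth_sol_def by auto
  define Y where "Y t = ln (x t) / \<alpha>T" for t
  have Yd: "(Y has_real_derivative \<phi> (x t) / \<alpha>T) (at t within {0..1})" if t: "t \<in> {0..1}" for t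
  proof -
    have "((\<lambda>t. ln (x t)) has_real_derivative inverse (x t) * (x t * \<phi> (x t))) (at t within {0..1})"
      by (rule DERIV_chain2[OF DERIV_ln xd[OF t]]) (use xp[OF t] in auto)
    then have "((\<lambda>t. ln (x t) / \<alpha>T) has_real_derivative inverse (x t) * (x t * \<phi> (x t)) / \<alpha>T) (at t within {0..1})"
      by (rule DERIV_cdivide)
    moreover have "inverse (x t) * (x t * \<phi> (x t)) = \<phi> (x t)" using xp[OF t] by (simp add: field_simps)
    ultimately show ?thesis unfolding Y_def by simp
  qed
  have Ycont: "continuous_on {0..1} Y"
    using Yd DERIV_continuous continuous_on_eq_continuous_within by blast
  have Y0: "Y 0 = y" unfolding Y_def x0 using aT by simp
  have Ymono: "y \<le> Y t" if t: "t \<in> {0..1}" for t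
  proof -
    have "Y 0 \<le> Y t"
    proof (rule DERIV_nonneg_imp_increasing_open[of 0 t Y])
      show "0 \<le> t" using t by simp
      show "continuous_on {0..t} Y" using Ycont by (rule continuous_on_subset) (use t in auto)
      fix s assume s: "0 < s" "s < t"
      have "at s within {0..1} = at s" using s t by (intro at_within_Icc_at) auto
      then show "\<exists>d. (Y has_real_derivative d) (at s) \<and> 0 \<le> d"
        using Yd[of s] s t xp[of s] pos[of "x s"] aT by (intro exI[of _ "\<phi> (x s) / \<alpha>T"]) auto
    qed
    then show ?thesis using Y0 by simp
  qed
  have Zd: "((\<lambda>t. K a (Y t) - t) has_real_derivative 0) (at t within {0..1})" if t: "t \<in> {0..1}" for t
  proof -
    have "((\<lambda>t. K a (Y t) - t) has_real_derivative k (Y t) * (\<phi> (x t) / \<alpha>T) - 1) (at t within {0..1})"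
      by (intro derivative_intros DERIV_chain2[OF K_der Yd[OF t]]) (use Ymono[OF t] a in auto)
    moreover have "k (Y t) * (\<phi> (x t) / \<alpha>T) = 1"
      unfolding k_def Y_def using aT xp[OF t] pos[of "x t"] by simp
    ultimately show ?thesis by simp
  qed
  obtain c where "\<forall>t\<in>{0..1}. K a (Y t) - t = c"
    using has_field_derivative_zero_constant[OF convex_real_interval(5) Zd] by blast
  note c = this
  have "K a (Y 1) - 1 = c" "K a (Y 0) - 0 = c" using bspec[OF c, of 0] bspec[OF c, of 1] by auto
  then have "K a (Y 1) - 1 = K a (Y 0) - 0" by simp
  then show ?thesis using Ymono[of 1] Y0 unfolding Y_def by auto
qed

lemma K_cont: "a < z \<Longrightarrow> isCont (K a) z"
  using K_der DERIV_isCont by blast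

lemma sol_exists: "\<exists>x. growth_sol \<phi> (exp (\<alpha>T*y)) x"
proof -
  define a where "a = y - 1"
  define b0 where "b0 = y - 1/2"
  define zm where "zm = y + 1 / k y + 1"
  have ay: "a < y" "a < b0" "b0 < y" "y < zm" unfolding a_def b0_def zm_def using k_pos[of y] by (auto simp: add_pos_pos)
  have "(zm - y) * k y \<le> K a zm - K a y" using K_lin[of a y zm] ay by simp
  moreover have "(zm - y) * k y = 1 + k y" unfolding zm_def using k_pos[of y] by (simp add: field_simps)
  ultimately have Kzm: "K a y + 1 < K a zm" using k_pos[of y] by simp
  have Kb0: "K a b0 < K a y" using K_strict ay by blast
  define G where "G w = (THE z. b0 \<le> z \<and> z \<le> zm \<and> K a z = w)" for w
  have G_prop: "b0 \<le> G w \<and> G w \<le> zm \<and> K a (G w) = w" if w: "K a b0 \<le> w" "w \<le> K a zm" for w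
  proof -
    obtain z where z: "b0 \<le> z" "z \<le> zm" "K a z = w"
      using IVT[of "K a" b0 w zm] w ay K_cont by force
    have "\<exists>!z. b0 \<le> z \<and> z \<le> zm \<and> K a z = w"
    proof (rule ex1I[of _ z])
      show "b0 \<le> z \<and> z \<le> zm \<and> K a z = w" using z by auto
      fix z' assume "b0 \<le> z' \<and> z' \<le> zm \<and> K a z' = w"
      then show "z' = z" using K_eq_iff[of a z' z] z ay by auto
    qed
    then show ?thesis unfolding G_def by (rule theI')
  qed
  have G_K: "G (K a z) = z" if "b0 \<le> z" "z \<le> zm" for z
  proof -
    have "K a b0 \<le> K a z" "K a z \<le> K a zm" using that ay K_le_iff[of a b0 z] K_le_iff[of a z zm] by auto
    then have "b0 \<le> G (K a z)" "K a (G (K a z)) = K a z" using G_prop by auto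
    then show ?thesis using K_eq_iff[of a "G (K a z)" z] ay that by auto
  qed
  have Gd: "DERIV G w :> inverse (k (G w))" if w: "K a y \<le> w" "w \<le> K a y + 1" for w
  proof -
    have gw: "b0 \<le> G w" "G w \<le> zm" "K a (G w) = w" using G_prop[of w] w Kb0 Kzm by auto
    have gy: "y \<le> G w" using K_le_iff[of a y "G w"] gw ay w by auto
    have gz: "G w < zm" using K_le_iff[of a zm "G w"] gw ay w Kzm by auto
    define d where "d = min (1/2) (zm - G w)"
    have d: "0 < d" unfolding d_def using gz by auto
    have zb: "b0 \<le> z \<and> z \<le> zm" if zd: "\<bar>z - G w\<bar> \<le> d" for z
    proof -
      have "d \<le> 1/2" "d \<le> zm - G w" unfolding d_def by (simp_all add: min_def)
      then show ?thesis using zd gy unfolding b0_def by (auto simp: abs_le_iff)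
    qed
    have "isCont G (K a (G w))"
    proof (rule isCont_inverse_function[where f="K a" and g=G and x="G w", OF d])
      fix z assume "\<bar>z - G w\<bar> \<le> d"
      then show "G (K a z) = z" using G_K zb by auto
    next
      fix z assume "\<bar>z - G w\<bar> \<le> d"
      then show "isCont (K a) z" using K_cont zb ay by force
    qed
    then have cont: "isCont G w" using gw by simp
    show ?thesis
    proof (rule DERIV_inverse_function[where f = "K a" and a = "K a b0" and b = "K a zm"])
      show "DERIV (K a) (G w) :> k (G w)" using K_der gw ay by auto
      show "k (G w) \<noteq> 0" using k_pos[of "G w"] by simp
      show "K a b0 < w" "w < K a zm" using w Kb0 Kzm by auto
      show "isCont G w" by (rule cont)
      fix w' assume "K a b0 < w'" "w' < K a zm"
      then show "K a (G w') = w'" using G_prop by auto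
    qed
  qed
  define x where "x t = exp (\<alpha>T * G (K a y + t))" for t
  have "growth_sol \<phi> (exp (\<alpha>T*y)) x"
    unfolding growth_sol_def
  proof (intro conjI ballI)
    show "x 0 = exp (\<alpha>T * y)" unfolding x_def using G_K[of y] ay by simp
    fix t :: real assume t: "t \<in> {0..1}"
    show "0 < x t" unfolding x_def by simp
    have "(x has_real_derivative exp (\<alpha>T * G (K a y + t)) * (\<alpha>T * (inverse (k (G (K a y + t))) * 1))) (at t)"
    proof -
      have "((\<lambda>s. G (K a y + s)) has_real_derivative inverse (k (G (K a y + t))) * 1) (at t)"
        by (rule DERIV_chain2[OF Gd]) (use t in \<open>auto intro!: derivative_eq_intros\<close>)
      then show ?thesis unfolding x_def
        by (intro DERIV_chain2[OF DERIV_exp] DERIV_cmult)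
    qed
    moreover have "\<alpha>T * inverse (k (G (K a y + t))) = \<phi> (x t)"
      unfolding k_def x_def using aT pos[of "exp (\<alpha>T * G (K a y + t))"] by (simp add: field_simps)
    ultimately show "(x has_real_derivative x t * \<phi> (x t)) (at t within {0..1})"
      unfolding x_def by (auto intro: has_field_derivative_at_within)
  qed
  then show ?thesis by blast
qed

lemma F_char: "a < y \<Longrightarrow> K a (F_map \<phi> \<alpha>T y) = K a y + 1 \<and> y \<le> F_map \<phi> \<alpha>T y"
proof -
  assume a: "a < y"
  obtain x where x: "growth_sol \<phi> (exp (\<alpha>T*y)) x" using sol_exists by blast
  have x1: "0 < x 1" using x unfolding growth_sol_def by auto
  have "(THE v. \<exists>x'. growth_sol \<phi> (exp (\<alpha>T * y)) x' \<and> v = x' 1) = x 1"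
  proof (rule the_equality)
    show "\<exists>x'. growth_sol \<phi> (exp (\<alpha>T * y)) x' \<and> x 1 = x' 1" using x by blast
    fix v assume "\<exists>x'. growth_sol \<phi> (exp (\<alpha>T * y)) x' \<and> v = x' 1"
    then obtain x' where x': "growth_sol \<phi> (exp (\<alpha>T * y)) x'" "v = x' 1" by blast
    have x'1: "0 < x' 1" using x' unfolding growth_sol_def by auto
    have c1: "K (y-1) (ln (x' 1)/\<alpha>T) = K (y-1) y + 1" "y \<le> ln (x' 1)/\<alpha>T"
      using sol_char[OF x'(1), of "y-1"] by auto
    have c2: "K (y-1) (ln (x 1)/\<alpha>T) = K (y-1) y + 1" "y \<le> ln (x 1)/\<alpha>T"
      using sol_char[OF x, of "y-1"] by auto
    have "ln (x' 1)/\<alpha>T = ln (x 1)/\<alpha>T"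
      using K_eq_iff[of "y-1" "ln (x' 1)/\<alpha>T" "ln (x 1)/\<alpha>T"] c1 c2 by auto
    then have "ln (x' 1) = ln (x 1)" using aT by simp
    then show "v = x 1" using x' x1 x'1 by simp
  qed
  then have "F_map \<phi> \<alpha>T y = ln (x 1) / \<alpha>T" unfolding F_map_def by simp
  then show ?thesis using sol_char[OF x a] by simp
qed

lemma F_strict: "y < y' \<Longrightarrow> F_map \<phi> \<alpha>T y < F_map \<phi> \<alpha>T y'"
proof -
  assume yy: "y < y'"
  have c: "K (y-1) (F_map \<phi> \<alpha>T y) = K (y-1) y + 1" "y \<le> F_map \<phi> \<alpha>T y"
    "K (y-1) (F_map \<phi> \<alpha>T y') = K (y-1) y' + 1" "y' \<le> F_map \<phi> \<alpha>T y'"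
    using F_char[of "y-1" y] F_char[of "y-1" y'] yy by auto
  have "K (y-1) y < K (y-1) y'" using K_strict yy by simp
  then show ?thesis using c K_le_iff[of "y-1" "F_map \<phi> \<alpha>T y'" "F_map \<phi> \<alpha>T y"] yy
    by (auto simp: not_le[symmetric])
qed

lemma F_mono: "y \<le> y' \<Longrightarrow> F_map \<phi> \<alpha>T y \<le> F_map \<phi> \<alpha>T y'"
  using F_strict[of y y'] by (cases "y = y'") auto

lemma F_lip: "0 \<le> \<delta> \<Longrightarrow> F_map \<phi> \<alpha>T (y + \<delta>) \<le> F_map \<phi> \<alpha>T y + \<delta>"
proof -
  assume d: "0 \<le> \<delta>"
  let ?a = "y - 1"
  have c: "K ?a (F_map \<phi> \<alpha>T y) = K ?a y + 1" "y \<le> F_map \<phi> \<alpha>T y"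
    "K ?a (F_map \<phi> \<alpha>T (y+\<delta>)) = K ?a (y+\<delta>) + 1" "y + \<delta> \<le> F_map \<phi> \<alpha>T (y+\<delta>)"
    using F_char[of ?a y] F_char[of ?a "y+\<delta>"] d by auto
  have "K ?a (y+\<delta>) - K ?a y \<le> K ?a (F_map \<phi> \<alpha>T y + \<delta>) - K ?a (F_map \<phi> \<alpha>T y)"
    by (rule K_shift) (use c d in auto)
  then have "K ?a (F_map \<phi> \<alpha>T (y+\<delta>)) \<le> K ?a (F_map \<phi> \<alpha>T y + \<delta>)" using c by simp
  then show ?thesis using K_le_iff[of ?a "F_map \<phi> \<alpha>T (y+\<delta>)" "F_map \<phi> \<alpha>T y + \<delta>"] c d by simp
qed

end


context
  fixes aO g aT :: real
  assumes aO: "0 < aO" and g: "0 < g" and aT: "0 < aT"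
begin

lemma BO_nonneg: "0 \<le> x \<Longrightarrow> 0 \<le> BED_O aO g x"
  unfolding BED_O_def using aO g by simp

lemma BT_nonneg: "0 \<le> x \<Longrightarrow> 0 \<le> BED_T aT x"
  unfolding BED_T_def using aT by simp

lemma BO_strict: "0 \<le> x \<Longrightarrow> x < y \<Longrightarrow> BED_O aO g x < BED_O aO g y"
proof -
  assume xy: "0 \<le> x" "x < y"
  have "g * x \<le> g * y" "g * x < g * y" using xy g by auto
  moreover have "g * x * (g * x) \<le> g * y * (g * y)" using xy g by (intro mult_mono) auto
  ultimately have "g * x + g * x * (g * x) / aO < g * y + g * y * (g * y) / aO"
    using aO by (intro add_less_le_mono divide_right_mono) auto
  then show ?thesis unfolding BED_O_def by (simp add: algebra_simps)
qed

lemma BO_le_iff: "0 \<le> x \<Longrightarrow> 0 \<le> y \<Longrightarrow> BED_O aO g x \<le> BED_O aO g y \<longleftrightarrow> x \<le> y"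
proof
  assume "0 \<le> x" "0 \<le> y" "BED_O aO g x \<le> BED_O aO g y"
  then show "x \<le> y" using BO_strict[of y x] by (meson not_le)
next
  assume "0 \<le> x" "0 \<le> y" "x \<le> y"
  then show "BED_O aO g x \<le> BED_O aO g y" using BO_strict[of x y] by (cases "x = y") auto
qed

lemma BT_mono: "0 \<le> x \<Longrightarrow> x \<le> y \<Longrightarrow> BED_T aT x \<le> BED_T aT y"
proof -
  assume xy: "0 \<le> x" "x \<le> y"
  have "x * x \<le> y * y" using xy by (intro mult_mono) auto
  then have "x + x * x / aT \<le> y + y * y / aT" using xy aT by (intro add_mono divide_right_mono) auto
  then show ?thesis unfolding BED_T_def by (simp add: algebra_simps)
qed

definition Dinv :: "real \<Rightarrow> real" where
  "Dinv u = aO / (2 * g) * (sqrt (1 + 4 * u / aO) - 1)"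

lemma Dinv: "0 \<le> u \<Longrightarrow> 0 \<le> Dinv u \<and> BED_O aO g (Dinv u) = u"
proof -
  assume u: "0 \<le> u"
  define s where "s = sqrt (1 + 4 * u / aO)"
  have s1: "1 \<le> s" unfolding s_def using u aO by simp
  have s2: "s^2 = 1 + 4 * u / aO" unfolding s_def using u aO by simp
  have "0 \<le> Dinv u" unfolding Dinv_def s_def[symmetric] using s1 aO g by simp
  moreover have "BED_O aO g (Dinv u) = aO * (s^2 - 1) / 4"
    unfolding BED_O_def Dinv_def s_def[symmetric] using aO g
    by (simp add: field_simps power2_eq_square)
  ultimately show ?thesis using s2 aO by simp
qed

lemma BT_ident: "BED_T aT x = x * (1 - aO / (g * aT)) + aO / (g^2 * aT) * BED_O aO g x"
proof -
  have "aO / (g^2 * aT) * (g * x * (1 + g * x / aO)) = x * (aO / (g * aT)) + x * x / aT"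
    using aO g aT by (simp add: field_simps power2_eq_square)
  moreover have "x * (1 - aO / (g * aT)) = x - x * (aO / (g * aT))" by algebra
  moreover have "x * (1 + x / aT) = x + x * x / aT" by (simp add: field_simps)
  ultimately show ?thesis unfolding BED_T_def BED_O_def by linarith
qed

lemma pair1:
  assumes r: "aO \<ge> g * aT" and ab: "0 \<le> a" "0 \<le> b" "0 \<le> e"
    and e: "BED_O aO g e = BED_O aO g a + BED_O aO g b"
  shows "BED_T aT a + BED_T aT b \<le> BED_T aT e"
proof -
  have "BED_O aO g a + BED_O aO g b \<le> BED_O aO g (a + b)"
    unfolding BED_O_def using aO g ab by (simp add: field_simps power2_eq_square)
  then have "BED_O aO g e \<le> BED_O aO g (a + b)" using e by simp
  then have eab: "e \<le> a + b" using BO_le_iff ab by simp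
  define rr where "rr = aO / (g * aT)"
  define q where "q = aO / (g^2 * aT)"
  have h: "\<And>x. BED_T aT x = x * (1 - rr) + q * BED_O aO g x" unfolding rr_def q_def by (rule BT_ident)
  have "1 - rr \<le> 0" unfolding rr_def using r g aT by (simp add: field_simps)
  then have "(a + b - e) * (1 - rr) \<le> 0" using eab by (intro mult_nonneg_nonpos) auto
  moreover have "(a + b - e) * (1 - rr) = a * (1 - rr) + b * (1 - rr) - e * (1 - rr)" by algebra
  moreover have "q * (BED_O aO g a + BED_O aO g b) = q * BED_O aO g a + q * BED_O aO g b" by algebra
  ultimately show ?thesis unfolding h e by linarith
qed

lemma sum1:
  assumes r: "aO \<ge> g * aT"
  shows "(\<forall>k<(n::nat). 0 \<le> d k) \<longrightarrow> (\<exists>e. 0 \<le> e \<and> BED_O aO g e = (\<Sum>k<n. BED_O aO g (d k)) \<and> (\<Sum>k<n. BED_T aT (d k)) \<le> BED_T aT e)"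
proof (induction n)
  case 0
  have "BED_O aO g 0 = 0" "BED_T aT 0 = 0" unfolding BED_O_def BED_T_def by simp_all
  then show ?case by (intro impI exI[of _ 0]) simp
next
  case (Suc n)
  show ?case
  proof
    assume dd: "\<forall>k<Suc n. 0 \<le> d k"
    then have "\<forall>k<n. 0 \<le> d k" by simp
    then obtain e where e: "0 \<le> e" "BED_O aO g e = (\<Sum>k<n. BED_O aO g (d k))"
      "(\<Sum>k<n. BED_T aT (d k)) \<le> BED_T aT e"
      using Suc.IH by blast
    have dn: "0 \<le> d n" using dd by simp
    define e' where "e' = Dinv (BED_O aO g e + BED_O aO g (d n))"
    have "0 \<le> BED_O aO g e + BED_O aO g (d n)" using BO_nonneg[OF e(1)] BO_nonneg[OF dn] by simp
    then have e': "0 \<le> e'" "BED_O aO g e' = BED_O aO g e + BED_O aO g (d n)"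
      unfolding e'_def using Dinv by blast+
    have "BED_T aT e + BED_T aT (d n) \<le> BED_T aT e'" by (rule pair1[OF r e(1) dn e'(1) e'(2)])
    then have "0 \<le> e' \<and> BED_O aO g e' = (\<Sum>k<Suc n. BED_O aO g (d k)) \<and> (\<Sum>k<Suc n. BED_T aT (d k)) \<le> BED_T aT e'"
      using e e' by simp
    then show "\<exists>e. 0 \<le> e \<and> BED_O aO g e = (\<Sum>k<Suc n. BED_O aO g (d k)) \<and> (\<Sum>k<Suc n. BED_T aT (d k)) \<le> BED_T aT e"
      by blast
  qed
qed

lemma pair2:
  assumes r: "aO < g * aT" and ab: "0 \<le> B" "B < A"
  defines "m \<equiv> Dinv ((BED_O aO g A + BED_O aO g B) / 2)"
  shows "0 \<le> m" "2 * BED_O aO g m = BED_O aO g A + BED_O aO g B" "m \<le> A"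
    "BED_T aT A + BED_T aT B < 2 * BED_T aT m"
proof -
  have "0 \<le> (BED_O aO g A + BED_O aO g B) / 2" using BO_nonneg ab by auto
  then have m: "0 \<le> m" "BED_O aO g m = (BED_O aO g A + BED_O aO g B) / 2"
    unfolding m_def using Dinv by auto
  show "0 \<le> m" "2 * BED_O aO g m = BED_O aO g A + BED_O aO g B" using m by auto
  have "BED_O aO g B \<le> BED_O aO g A" using BO_le_iff ab by simp
  then have "BED_O aO g m \<le> BED_O aO g A" using m by simp
  then show mA: "m \<le> A" using BO_le_iff[of m A] m ab by simp
  have "(BED_O aO g A + BED_O aO g B) / 2 - BED_O aO g ((A + B) / 2) = g^2 / aO * (A - B)^2 / 4"
    unfolding BED_O_def using aO by (simp add: field_simps power2_eq_square)
  moreover have "0 < g^2 / aO * (A - B)^2 / 4" using ab aO g by simp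
  ultimately have "BED_O aO g ((A + B) / 2) < BED_O aO g m" using m by linarith
  then have "(A + B) / 2 < m" using BO_le_iff[of m "(A+B)/2"] m ab by force
  moreover have "0 < 1 - aO / (g * aT)" using r g aT by (simp add: field_simps)
  ultimately have "0 < (2 * m - A - B) * (1 - aO / (g * aT))" by (intro mult_pos_pos) auto
  define rr where "rr = aO / (g * aT)"
  define q where "q = aO / (g^2 * aT)"
  have h: "\<And>x. BED_T aT x = x * (1 - rr) + q * BED_O aO g x" unfolding rr_def q_def by (rule BT_ident)
  have "0 < (2 * m - A - B) * (1 - rr)" using \<open>0 < (2 * m - A - B) * (1 - aO / (g * aT))\<close> unfolding rr_def .
  moreover have "q * (2 * BED_O aO g m) = q * (BED_O aO g A + BED_O aO g B)" using m(2) by simp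
  moreover have "(2 * m - A - B) * (1 - rr) = 2 * (m * (1 - rr)) - A * (1 - rr) - B * (1 - rr)" by algebra
  moreover have "q * (BED_O aO g A + BED_O aO g B) = q * BED_O aO g A + q * BED_O aO g B" by algebra
  moreover have "q * (2 * BED_O aO g m) = 2 * (q * BED_O aO g m)" by algebra
  moreover have "2 * (m * (1 - rr) + q * BED_O aO g m) = 2 * (m * (1 - rr)) + 2 * (q * BED_O aO g m)" by algebra
  ultimately show "BED_T aT A + BED_T aT B < 2 * BED_T aT m"
    unfolding h by linarith
qed

end


theorem theorem3:
  fixes \<alpha>T \<beta>T abO \<gamma> c X0 :: real and \<phi> :: "real \<Rightarrow> real" and N :: nat
  assumes "0 < \<alpha>T" "0 < \<beta>T" "0 < abO" "0 < \<gamma>" "\<gamma> < 1" "0 < c" "0 < X0" "1 \<le> N"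
    and "continuous_on {0<..} \<phi>"
    and "\<And>x y. 0 < x \<Longrightarrow> x \<le> y \<Longrightarrow> \<phi> y \<le> \<phi> x"
    and "\<And>x. 0 < x \<Longrightarrow> 0 < \<phi> x"
  shows "(abO \<ge> \<gamma> * (\<alpha>T / \<beta>T) \<longrightarrow>
            optimal \<phi> \<alpha>T (\<alpha>T / \<beta>T) X0 N abO \<gamma> c
              (\<lambda>i. if i = N - 1 then abO / (2 * \<gamma>) * (sqrt (1 + 4 * c / abO) - 1) else 0))
       \<and> (abO < \<gamma> * (\<alpha>T / \<beta>T) \<longrightarrow>
            (\<forall>d. optimal \<phi> \<alpha>T (\<alpha>T / \<beta>T) X0 N abO \<gamma> c d \<longrightarrow>
                 (\<forall>i. Suc i < N \<longrightarrow> d i \<le> d (Suc i))))"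
proof -
  interpret G: grow \<phi> \<alpha>T by unfold_locales (use assms in auto)
  define aT where "aT = \<alpha>T / \<beta>T"
  have aT: "0 < aT" unfolding aT_def using assms by simp
  have aO: "0 < abO" and g: "0 < \<gamma>" using assms by auto
  define F where "F = F_map \<phi> \<alpha>T"
  define Y where "Y = Yplus \<phi> \<alpha>T aT X0"
  have Y0: "Y d 0 = ln X0 / \<alpha>T - BED_T aT (d 0)" for d unfolding Y_def by simp
  have YS: "Y d (Suc i) = F (Y d i) - BED_T aT (d (Suc i))" for d i unfolding Y_def F_def by simp
  have Fm: "F y \<le> F y'" if "y \<le> y'" for y y' unfolding F_def using G.F_mono that by blast
  have Fs: "F y < F y'" if "y < y'" for y y' unfolding F_def using G.F_strict that by blast
  have Fl: "F (y + \<delta>) \<le> F y + \<delta>" if "0 \<le> \<delta>" for y \<delta> unfolding F_def using G.F_lip that by blast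
  have BT0: "BED_T aT 0 = 0" and BO0: "BED_O abO \<gamma> 0 = 0" unfolding BED_T_def BED_O_def by simp_all
  have BTn: "0 \<le> BED_T aT x" if "0 \<le> x" for x using BT_nonneg[OF aO g aT that] .
  have BOn: "0 \<le> BED_O abO \<gamma> x" if "0 \<le> x" for x using BO_nonneg[OF aO g aT that] .
  have N1: "Suc (N - 1) = N" using assms by simp
  show ?thesis
    unfolding aT_def[symmetric] optimal_def Y_def[symmetric]
  proof (rule conjI[OF impI impI], goal_cases)
    case 1
    note r = 1
    define dst where "dst = abO / (2 * \<gamma>) * (sqrt (1 + 4 * c / abO) - 1)"
    have dst: "0 \<le> dst" "BED_O abO \<gamma> dst = c"
      using Dinv[OF aO g aT, of c] assms unfolding dst_def Dinv_def[OF aO g aT] by auto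
    define D where "D = (\<lambda>i. if i = N - 1 then dst else 0)"
    have sumD: "(\<Sum>k<N. BED_O abO \<gamma> (D k)) = c"
    proof -
      have "(\<Sum>k<N. BED_O abO \<gamma> (D k)) = (\<Sum>k<N. if k = N - 1 then BED_O abO \<gamma> dst else 0)"
        unfolding D_def by (rule sum.cong) (auto simp: BO0)
      also have "\<dots> = BED_O abO \<gamma> dst" using assms by (simp add: sum.delta)
      finally show ?thesis using dst by simp
    qed
    have feasD: "feasible N abO \<gamma> c D" unfolding feasible_def sumD using dst by (auto simp: D_def)
    define P where "P j = (F ^^ j) (ln X0 / \<alpha>T)" for j
    have lower: "(\<forall>k\<le>j. 0 \<le> d k) \<longrightarrow> P j - (\<Sum>k<Suc j. BED_T aT (d k)) \<le> Y d j" for d j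
    proof (induction j)
      case 0
      show ?case by (simp add: P_def Y0)
    next
      case (Suc j)
      show ?case
      proof
        assume dd: "\<forall>k\<le>Suc j. 0 \<le> d k"
        let ?S = "\<Sum>k<Suc j. BED_T aT (d k)"
        have S0: "0 \<le> ?S" using dd BTn by (intro sum_nonneg) auto
        have ih: "P j - ?S \<le> Y d j" using Suc.IH dd by auto
        have "F (P j) \<le> F (P j - ?S) + ?S" using Fl[OF S0, of "P j - ?S"] by simp
        also have "\<dots> \<le> F (Y d j) + ?S" using Fm[OF ih] by simp
        finally have "F (P j) - ?S - BED_T aT (d (Suc j)) \<le> Y d (Suc j)" unfolding YS by simp
        then show "P (Suc j) - (\<Sum>k<Suc (Suc j). BED_T aT (d k)) \<le> Y d (Suc j)"
          unfolding P_def by simp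
      qed
    qed
    have YD: "j < N - 1 \<longrightarrow> Y D j = P j" for j
    proof (induction j)
      case 0
      then show ?case by (auto simp: P_def Y0 D_def BT0)
    next
      case (Suc j)
      then show ?case by (auto simp: P_def YS D_def BT0)
    qed
    have YDN: "Y D (N - 1) = P (N - 1) - BED_T aT dst"
    proof (cases "N - 1")
      case 0
      then show ?thesis by (simp add: Y0 P_def D_def)
    next
      case (Suc j)
      then have "Y D j = P j" using YD[of j] by simp
      then show ?thesis using Suc by (simp add: YS P_def D_def)
    qed
    have res: "feasible N abO \<gamma> c D \<and> (\<forall>d'. feasible N abO \<gamma> c d' \<longrightarrow> Y D (N - 1) \<le> Y d' (N - 1))"
    proof (intro conjI allI impI feasD)
      fix d' assume fd: "feasible N abO \<gamma> c d'"
      then have d'n: "\<forall>k<N. 0 \<le> d' k" and d's: "(\<Sum>k<N. BED_O abO \<gamma> (d' k)) \<le> c"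
        unfolding feasible_def by auto
      obtain e where e: "0 \<le> e" "BED_O abO \<gamma> e = (\<Sum>k<N. BED_O abO \<gamma> (d' k))"
        "(\<Sum>k<N. BED_T aT (d' k)) \<le> BED_T aT e"
        using sum1[OF aO g aT r, of N d'] d'n by blast
      have "e \<le> dst" using BO_le_iff[OF aO g aT e(1) dst(1)] e(2) d's dst(2) by simp
      then have "BED_T aT e \<le> BED_T aT dst" using BT_mono[OF aO g aT e(1)] by simp
      moreover have "P (N - 1) - (\<Sum>k<N. BED_T aT (d' k)) \<le> Y d' (N - 1)"
        using lower[of "N - 1" d'] d'n N1 by (metis Suc_le_lessD le_imp_less_Suc)
      ultimately show "Y D (N - 1) \<le> Y d' (N - 1)" using YDN e(3) by linarith
    qed
    then show ?case unfolding D_def dst_def .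
  next
    case 2
    note r = 2
    show ?case
    proof (intro allI impI)
    fix d i
    assume opt: "feasible N abO \<gamma> c d \<and> (\<forall>d'. feasible N abO \<gamma> c d' \<longrightarrow> Y d (N - 1) \<le> Y d' (N - 1))"
      and iN: "Suc i < N"
    show "d i \<le> d (Suc i)"
    proof (rule ccontr)
      assume "\<not> d i \<le> d (Suc i)"
      then have BA: "d (Suc i) < d i" by simp
      have dn: "\<forall>k<N. 0 \<le> d k" and ds: "(\<Sum>k<N. BED_O abO \<gamma> (d k)) \<le> c"
        using opt unfolding feasible_def by auto
      have B0: "0 \<le> d (Suc i)" using dn iN by auto
      define m where "m = Dinv abO \<gamma> ((BED_O abO \<gamma> (d i) + BED_O abO \<gamma> (d (Suc i))) / 2)"
      note p2 = pair2[OF aO g aT r B0 BA, folded m_def]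
      define d' where "d' = d(i := m, Suc i := m)"
      have feas': "feasible N abO \<gamma> c d'"
        unfolding feasible_def
      proof
        show "\<forall>k<N. 0 \<le> d' k" using dn p2(1) by (auto simp: d'_def)
        define h where "h k = BED_O abO \<gamma> (d' k) - BED_O abO \<gamma> (d k)" for k
        have "(\<Sum>k<N. h k) = (\<Sum>k\<in>{i, Suc i}. h k)"
          by (rule sum.mono_neutral_right) (use iN in \<open>auto simp: h_def d'_def\<close>)
        also have "\<dots> = 0" using p2(2) by (simp add: h_def d'_def)
        finally have "(\<Sum>k<N. BED_O abO \<gamma> (d' k)) = (\<Sum>k<N. BED_O abO \<gamma> (d k))"
          unfolding h_def by (simp add: sum_subtractf)
        then show "(\<Sum>k<N. BED_O abO \<gamma> (d' k)) \<le> c" using ds by simp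
      qed
      have below: "j < i \<longrightarrow> Y d' j = Y d j" for j
      proof (induction j)
        case 0 then show ?case by (simp add: Y0 d'_def)
      next
        case (Suc j) then show ?case by (simp add: YS d'_def)
      qed
      have Yi: "Y d' i = Y d i + (BED_T aT (d i) - BED_T aT m)"
      proof (cases i)
        case 0 then show ?thesis by (simp add: Y0 d'_def)
      next
        case (Suc i0)
        then have "Y d' i0 = Y d i0" using below[of i0] by simp
        then show ?thesis using Suc by (simp add: YS d'_def)
      qed
      have mA: "BED_T aT m \<le> BED_T aT (d i)" using BT_mono[OF aO g aT p2(1) p2(3)] .
      have "F (Y d' i) \<le> F (Y d i) + (BED_T aT (d i) - BED_T aT m)"
        unfolding Yi by (rule Fl) (use mA in simp)
      then have key: "Y d' (Suc i) < Y d (Suc i)"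
        using p2(4) by (simp add: YS d'_def)
      have propg: "Y d' j < Y d j" if "Suc i \<le> j" for j
        using that
      proof (induction j rule: dec_induct)
        case base then show ?case by (rule key)
      next
        case (step n)
        then have "F (Y d' n) < F (Y d n)" using Fs by blast
        moreover have "d' (Suc n) = d (Suc n)" using step by (simp add: d'_def)
        ultimately show ?case by (simp add: YS)
      qed
      have "Y d' (N - 1) < Y d (N - 1)" using propg iN by simp
      moreover have "Y d (N - 1) \<le> Y d' (N - 1)" using opt feas' by blast
      ultimately show False by simp
    qed
    qed
  qed
qed

end
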